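(* Let $(W,S)$ be a Coxeter system with $S$ finite and let $A_W=\langle a_s\ (s\in S)\mid (a_sa_t)_{m(s,t)}=(a_ta_s)_{m(s,t)}\ (s,t\in S,\ s\neq t,\ m(s,t)<\infty)\rangle$ be the associated Artin group. Then the assignment $a_s\mapsto e_s$ ($s\in S$) yields a well-defined surjective homomorphism $\psi:A_W\to\operatorname{Ad}(Q_W)$.
   Context: A Coxeter system $(W,S)$: $S$ finite, $m:S\times S\to\mathbb{N}\cup\{\infty\}$ with $m(s,s)=1$, $2\le m(s,t)=m(t,s)\le\infty$ for $s\ne t$, and $W=\langle s\in S\mid (st)^{m(s,t)}=1\ (m(s,t)<\infty)\rangle$. For group elements $g,h$ and an integer $m\ge2$, $(gh)_m$ denotes the alternating product $ghgh\cdots$ with $m$ factors. The Coxeter quandle $Q_W=\bigcup_{w\in W}w^{-1}Sw$ has operation $x\ast y=yxy$, and $\operatorname{Ad}(Q_W)=\langle e_x\ (x\in Q_W)\mid e_y^{-1}e_xe_y=e_{x\ast y}\ (x,y\in Q_W)\rangle$. *)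

theory Defs
  imports "HOL-Algebra.Group" "HOL-Library.Extended_Nat"
begin

text \<open>Group presentations. Words in the free group on a type of generators are lists of
  pairs (x, b); (x, True) is the letter x, (x, False) is its formal inverse.\<close>

type_synonym 'g word = "('g \<times> bool) list"

definition inv_word :: "'g word \<Rightarrow> 'g word" where
  "inv_word w = rev (map (\<lambda>(x, b). (x, \<not> b)) w)"

inductive pres_eqv :: "'g word set \<Rightarrow> 'g word \<Rightarrow> 'g word \<Rightarrow> bool" for R where
  refl: "pres_eqv R w w"
| sym: "pres_eqv R u v \<Longrightarrow> pres_eqv R v u"
| trans: "pres_eqv R u v \<Longrightarrow> pres_eqv R v w \<Longrightarrow> pres_eqv R u w"
| cancel: "pres_eqv R (u @ [(x, b), (x, \<not> b)] @ v) (u @ v)"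
| relator: "r \<in> R \<Longrightarrow> pres_eqv R (u @ r @ v) (u @ v)"

definition pclass :: "'g word set \<Rightarrow> 'g word \<Rightarrow> 'g word set" where
  "pclass R w = {v. pres_eqv R w v}"

definition presented_group :: "'g set \<Rightarrow> 'g word set \<Rightarrow> 'g word set monoid" where
  "presented_group X R =
     \<lparr> carrier = pclass R ` {w. fst ` set w \<subseteq> X},
       mult = (\<lambda>A B. {v. \<exists>a\<in>A. \<exists>b\<in>B. pres_eqv R (a @ b) v}),
       one = pclass R [] \<rparr>"

fun alt :: "'g \<Rightarrow> 'g \<Rightarrow> nat \<Rightarrow> 'g word" where
  "alt s t 0 = []"
| "alt s t (Suc n) = (s, True) # alt t s n"

definition coxeter_matrix :: "'s set \<Rightarrow> ('s \<Rightarrow> 's \<Rightarrow> enat) \<Rightarrow> bool" where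
  "coxeter_matrix S m \<longleftrightarrow> finite S \<and> (\<forall>s\<in>S. m s s = 1) \<and>
     (\<forall>s\<in>S. \<forall>t\<in>S. s \<noteq> t \<longrightarrow> m s t = m t s \<and> 2 \<le> m s t)"

text \<open>Coxeter relators (st)^{m(s,t)} = (st)_{2 m(s,t)} for m(s,t) finite.\<close>
definition coxeter_rels :: "'s set \<Rightarrow> ('s \<Rightarrow> 's \<Rightarrow> enat) \<Rightarrow> 's word set" where
  "coxeter_rels S m = {alt s t (2 * n) | s t n. s \<in> S \<and> t \<in> S \<and> m s t = enat n}"

definition coxeter_group :: "'s set \<Rightarrow> ('s \<Rightarrow> 's \<Rightarrow> enat) \<Rightarrow> 's word set monoid" where
  "coxeter_group S m = presented_group S (coxeter_rels S m)"

definition cox_gen :: "'s set \<Rightarrow> ('s \<Rightarrow> 's \<Rightarrow> enat) \<Rightarrow> 's \<Rightarrow> 's word set" where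
  "cox_gen S m s = pclass (coxeter_rels S m) [(s, True)]"

definition coxeter_quandle :: "'s set \<Rightarrow> ('s \<Rightarrow> 's \<Rightarrow> enat) \<Rightarrow> 's word set set" where
  "coxeter_quandle S m =
     {pclass (coxeter_rels S m) (inv_word w @ [(s, True)] @ w) | w s. s \<in> S \<and> fst ` set w \<subseteq> S}"

definition quandle_op :: "'s set \<Rightarrow> ('s \<Rightarrow> 's \<Rightarrow> enat) \<Rightarrow> 's word set \<Rightarrow> 's word set \<Rightarrow> 's word set" where
  "quandle_op S m x y = y \<otimes>\<^bsub>coxeter_group S m\<^esub> x \<otimes>\<^bsub>coxeter_group S m\<^esub> y"

definition adjoint_rels :: "'s set \<Rightarrow> ('s \<Rightarrow> 's \<Rightarrow> enat) \<Rightarrow> 's word set word set" where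
  "adjoint_rels S m = {[(y, False), (x, True), (y, True), (quandle_op S m x y, False)] | x y.
      x \<in> coxeter_quandle S m \<and> y \<in> coxeter_quandle S m}"

definition adjoint_group :: "'s set \<Rightarrow> ('s \<Rightarrow> 's \<Rightarrow> enat) \<Rightarrow> 's word set word set monoid" where
  "adjoint_group S m = presented_group (coxeter_quandle S m) (adjoint_rels S m)"

definition artin_rels :: "'s set \<Rightarrow> ('s \<Rightarrow> 's \<Rightarrow> enat) \<Rightarrow> 's word set" where
  "artin_rels S m = {alt s t n @ inv_word (alt t s n) | s t n.
      s \<in> S \<and> t \<in> S \<and> s \<noteq> t \<and> m s t = enat n}"

definition artin_group :: "'s set \<Rightarrow> ('s \<Rightarrow> 's \<Rightarrow> enat) \<Rightarrow> 's word set monoid" where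
  "artin_group S m = presented_group S (artin_rels S m)"

end

theory Submission imports Defs begin

declare pres_eqv.trans[trans]

lemma pe_app: "pres_eqv R u v \<Longrightarrow> pres_eqv R (c @ u @ d) (c @ v @ d)"
proof (induction rule: pres_eqv.induct)
  case (refl w) then show ?case by (rule pres_eqv.refl)
next
  case (sym u v) then show ?case by (blast intro: pres_eqv.sym)
next
  case (trans u v w) then show ?case by (metis pres_eqv.trans)
next
  case (cancel u x b v)
  have "pres_eqv R ((c@u) @ [(x,b),(x,\<not>b)] @ (v@d)) ((c@u)@(v@d))" by (rule pres_eqv.cancel)
  then show ?case by simp
next
  case (relator r u v)
  have "pres_eqv R ((c@u) @ r @ (v@d)) ((c@u)@(v@d))" using relator by (rule pres_eqv.relator)
  then show ?case by simp
qed

lemma pe_app2: "pres_eqv R u u' \<Longrightarrow> pres_eqv R v v' \<Longrightarrow> pres_eqv R (u@v) (u'@v')"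
proof -
  assume a: "pres_eqv R u u'" and b: "pres_eqv R v v'"
  have "pres_eqv R ([]@u@v) ([]@u'@v)" using pe_app[OF a] .
  moreover have "pres_eqv R (u'@v@[]) (u'@v'@[])" using pe_app[OF b] .
  ultimately show ?thesis by (simp add: pres_eqv.trans)
qed

lemma pe_inv: "pres_eqv R (w @ inv_word w) []"
proof (induction w)
  case Nil then show ?case by (simp add: inv_word_def pres_eqv.refl)
next
  case (Cons l w)
  obtain x b where l: "l = (x,b)" by force
  have iw: "inv_word (l#w) = inv_word w @ [(x,\<not>b)]" by (simp add: inv_word_def l)
  have "pres_eqv R ([(x,b)] @ (w @ inv_word w) @ [(x,\<not>b)]) ([(x,b)] @ [] @ [(x,\<not>b)])"
    using pe_app[OF Cons.IH] .
  moreover have "pres_eqv R ([] @ [(x,b),(x,\<not>b)] @ []) ([] @ [])" by (rule pres_eqv.cancel)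
  ultimately show ?case using iw l by (auto intro: pres_eqv.trans)
qed

lemma pe_rel: "r \<in> R \<Longrightarrow> pres_eqv R r []"
  using pres_eqv.relator[of r R "[]" "[]"] by simp

lemma pclass_eq: "pclass R a = pclass R b \<longleftrightarrow> pres_eqv R a b"
  unfolding pclass_def
  by (auto intro: pres_eqv.refl pres_eqv.sym pres_eqv.trans)

lemma mult_pclass: "pclass R a \<otimes>\<^bsub>presented_group X R\<^esub> pclass R b = pclass R (a@b)"
  unfolding presented_group_def pclass_def
  by (auto intro: pres_eqv.refl pres_eqv.trans pe_app2)

lemma pe_cancel_left: "pres_eqv R (w @ inv_word w @ v) v"
  using pe_app[OF pe_inv[of R w], of "[]" v] by simp

lemma inv_word_append: "inv_word (u @ v) = inv_word v @ inv_word u"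
  by (simp add: inv_word_def)

lemma alt_snoc: "alt a b (Suc n) = alt a b n @ [(if even n then a else b, True)]"
  by (induction n arbitrary: a b) auto

lemma alt_add: "alt a b (n + k) = alt a b n @ alt (if even n then a else b) (if even n then b else a) k"
  by (induction n arbitrary: a b) auto

lemma rev_alt: "rev (alt a b n) = alt (if even n then b else a) (if even n then a else b) n"
proof (induction n arbitrary: a b)
  case 0 then show ?case by simp
next
  case (Suc n)
  have h: "(x,True) # alt y x n = alt x y n @ [(if even n then x else y, True)]" for x y
    using alt_snoc[of x y n] by simp
  show ?case by (simp add: Suc alt_snoc h del: alt.simps(2))
qed

lemma alt_set: "set (alt a b n) \<subseteq> {(a,True),(b,True)}"
  by (induction n arbitrary: a b) auto

lemma alt_double: "alt t s n @ rev (alt s t n) = alt t s (2*n)"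
  using alt_add[of t s n n] by (simp add: rev_alt mult_2)


definition phi :: "'s set \<Rightarrow> ('s \<Rightarrow> 's \<Rightarrow> enat) \<Rightarrow> 's word \<Rightarrow> 's word set word" where
  "phi S m w = map (\<lambda>(x,b). (cox_gen S m x, b)) w"

lemma phi_append: "phi S m (u @ v) = phi S m u @ phi S m v" by (simp add: phi_def)
lemma phi_inv: "phi S m (inv_word w) = inv_word (phi S m w)"
  by (simp add: phi_def inv_word_def rev_map case_prod_unfold)
lemma phi_alt: "phi S m (alt s t n) = alt (cox_gen S m s) (cox_gen S m t) n"
  by (induction n arbitrary: s t) (auto simp: phi_def)

context
  fixes S :: "'s set" and m :: "'s \<Rightarrow> 's \<Rightarrow> enat"
  assumes cm: "coxeter_matrix S m"
begin

lemma s_sq: "s \<in> S \<Longrightarrow> pres_eqv (coxeter_rels S m) [(s,True),(s,True)] []"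
proof -
  assume s: "s \<in> S"
  have "m s s = enat 1" using cm s by (simp add: coxeter_matrix_def one_enat_def)
  then have "alt s s (2*1) \<in> coxeter_rels S m" using s unfolding coxeter_rels_def by blast
  then show ?thesis by (simp add: pe_rel numeral_2_eq_2)
qed

lemma s_flip: "s \<in> S \<Longrightarrow> pres_eqv (coxeter_rels S m) [(s,b)] [(s,True)]"
proof (cases b)
  case True then show ?thesis by (simp add: pres_eqv.refl)
next
  case False
  assume s: "s \<in> S"
  have "pres_eqv (coxeter_rels S m) ([(s,False)] @ [(s,True),(s,True)] @ []) ([(s,False)] @ [] @ [])"
    using pe_app[OF s_sq[OF s]] .
  moreover have "pres_eqv (coxeter_rels S m) ([] @ [(s,False),(s,\<not>False)] @ [(s,True)]) ([] @ [(s,True)])"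
    by (rule pres_eqv.cancel)
  ultimately show ?thesis using False by (auto intro: pres_eqv.trans pres_eqv.sym)
qed

lemma pos_eqv: "fst ` set w \<subseteq> S \<Longrightarrow> pres_eqv (coxeter_rels S m) w (map (\<lambda>(x,b). (x,True)) w)"
proof (induction w)
  case Nil then show ?case by (simp add: pres_eqv.refl)
next
  case (Cons l w)
  obtain x b where l: "l = (x,b)" by force
  have x: "x \<in> S" using Cons.prems l by auto
  have "pres_eqv (coxeter_rels S m) ([(x,b)] @ w) ([(x,True)] @ map (\<lambda>(x,b). (x,True)) w)"
    using Cons x by (intro pe_app2 s_flip) auto
  then show ?case using l by simp
qed

lemma revpos: "set p \<subseteq> S \<times> {True} \<Longrightarrow> pres_eqv (coxeter_rels S m) (rev p @ p) []"
proof (induction p)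
  case Nil then show ?case by (simp add: pres_eqv.refl)
next
  case (Cons l q)
  obtain x where l: "l = (x,True)" and x: "x \<in> S" using Cons.prems by auto
  have "pres_eqv (coxeter_rels S m) (rev q @ [(x,True),(x,True)] @ q) (rev q @ [] @ q)"
    using pe_app[OF s_sq[OF x]] .
  then show ?case using Cons l by (auto intro: pres_eqv.trans)
qed

lemma Q_closed:
  assumes a: "pclass (coxeter_rels S m) a \<in> coxeter_quandle S m" and s: "s \<in> S"
  shows "pclass (coxeter_rels S m) ([(s,True)] @ a @ [(s,True)]) \<in> coxeter_quandle S m"
proof -
  obtain w r where r: "r \<in> S" and w: "fst ` set w \<subseteq> S"
    and eq: "pclass (coxeter_rels S m) a = pclass (coxeter_rels S m) (inv_word w @ [(r, True)] @ w)"
    using a unfolding coxeter_quandle_def by blast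
  have e: "pres_eqv (coxeter_rels S m) a (inv_word w @ [(r, True)] @ w)" using eq pclass_eq by metis
  have "pres_eqv (coxeter_rels S m) ([(s,True)] @ a @ [(s,True)])
     ([(s,False)] @ (inv_word w @ [(r, True)] @ w) @ [(s,True)])"
    by (intro pe_app2 e pres_eqv.refl pres_eqv.sym[OF s_flip[OF s]])
  then have "pclass (coxeter_rels S m) ([(s,True)] @ a @ [(s,True)]) =
     pclass (coxeter_rels S m) (inv_word (w @ [(s,True)]) @ [(r, True)] @ (w @ [(s,True)]))"
    by (simp add: pclass_eq inv_word_def)
  moreover have "fst ` set (w @ [(s,True)]) \<subseteq> S" using w s by auto
  ultimately show ?thesis unfolding coxeter_quandle_def using r by blast
qed

lemma gen_Q: "s \<in> S \<Longrightarrow> cox_gen S m s \<in> coxeter_quandle S m"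
  unfolding coxeter_quandle_def cox_gen_def
  by (rule CollectI, rule exI[of _ "[]"], rule exI[of _ s]) (simp add: inv_word_def)

lemma qop: "quandle_op S m (pclass (coxeter_rels S m) a) (pclass (coxeter_rels S m) b)
   = pclass (coxeter_rels S m) (b @ a @ b)"
  unfolding quandle_op_def coxeter_group_def by (simp add: mult_pclass)

lemma adrel:
  assumes "x \<in> coxeter_quandle S m" "y \<in> coxeter_quandle S m"
  shows "pres_eqv (adjoint_rels S m) [(y,False),(x,True),(y,True)] [(quandle_op S m x y, True)]"
proof -
  let ?z = "quandle_op S m x y"
  have r: "[(y,False),(x,True),(y,True),(?z,False)] \<in> adjoint_rels S m"
    unfolding adjoint_rels_def using assms by blast
  have "pres_eqv (adjoint_rels S m) ([(y,False),(x,True),(y,True)] @ [(?z,False),(?z,\<not>False)] @ [])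
     ([(y,False),(x,True),(y,True)] @ [])" by (rule pres_eqv.cancel)
  moreover have "pres_eqv (adjoint_rels S m) ([] @ [(y,False),(x,True),(y,True),(?z,False)] @ [(?z,True)])
     ([] @ [(?z,True)])" using r by (rule pres_eqv.relator)
  ultimately show ?thesis by (auto intro: pres_eqv.trans pres_eqv.sym)
qed

lemma conj:
  "set p \<subseteq> S \<times> {True} \<Longrightarrow> pclass (coxeter_rels S m) a \<in> coxeter_quandle S m \<Longrightarrow>
   pres_eqv (adjoint_rels S m) (inv_word (phi S m p) @ [(pclass (coxeter_rels S m) a, True)] @ phi S m p)
     [(pclass (coxeter_rels S m) (rev p @ a @ p), True)]"
proof (induction p arbitrary: a)
  case Nil then show ?case by (simp add: phi_def inv_word_def pres_eqv.refl)
next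
  case (Cons l q)
  obtain r where l: "l = (r,True)" and r: "r \<in> S" using Cons.prems by auto
  let ?c = "cox_gen S m r"
  let ?a' = "[(r,True)] @ a @ [(r,True)]"
  have pl: "phi S m ((r,True) # q) = (?c, True) # phi S m q" by (simp add: phi_def)
  have ipl: "inv_word ((?c, True) # phi S m q) = inv_word (phi S m q) @ [(?c, False)]"
    by (simp add: inv_word_def)
  have qa': "pclass (coxeter_rels S m) ?a' \<in> coxeter_quandle S m" using Q_closed Cons.prems r by blast
  have c: "?c = pclass (coxeter_rels S m) [(r,True)]" by (simp add: cox_gen_def)
  have "pres_eqv (adjoint_rels S m) [(?c,False),(pclass (coxeter_rels S m) a,True),(?c,True)]
         [(quandle_op S m (pclass (coxeter_rels S m) a) ?c, True)]"
    using adrel Cons.prems gen_Q r by blast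
  also have "quandle_op S m (pclass (coxeter_rels S m) a) ?c = pclass (coxeter_rels S m) ?a'"
    by (simp add: c qop)
  finally have h: "pres_eqv (adjoint_rels S m) [(?c,False),(pclass (coxeter_rels S m) a,True),(?c,True)]
         [(pclass (coxeter_rels S m) ?a', True)]" .
  have "pres_eqv (adjoint_rels S m)
     (inv_word (phi S m q) @ [(?c,False),(pclass (coxeter_rels S m) a,True),(?c,True)] @ phi S m q)
     (inv_word (phi S m q) @ [(pclass (coxeter_rels S m) ?a', True)] @ phi S m q)"
    using pe_app[OF h] .
  also have "pres_eqv (adjoint_rels S m) \<dots> [(pclass (coxeter_rels S m) (rev q @ ?a' @ q), True)]"
    using Cons.IH[OF _ qa'] Cons.prems by auto
  finally show ?case by (simp add: ipl pl l)
qed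

lemma W_braid:
  assumes s: "s \<in> S" and t: "t \<in> S" and n: "m s t = enat n"
  shows "pres_eqv (coxeter_rels S m) (alt t s n) (alt s t n)"
proof (cases "s = t")
  case True then show ?thesis by (simp add: pres_eqv.refl)
next
  case False
  have "m t s = enat n" using cm s t n False by (simp add: coxeter_matrix_def)
  then have "alt t s (2*n) \<in> coxeter_rels S m" using s t unfolding coxeter_rels_def by blast
  then have h: "pres_eqv (coxeter_rels S m) (alt t s n @ rev (alt s t n)) []"
    by (simp add: alt_double pe_rel)
  have sp: "set (alt s t n) \<subseteq> S \<times> {True}" using alt_set[of s t n] s t by auto
  have "pres_eqv (coxeter_rels S m) ((alt t s n @ rev (alt s t n)) @ alt s t n) ([] @ alt s t n)"
    using pe_app2[OF h pres_eqv.refl] .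
  moreover have "pres_eqv (coxeter_rels S m) (alt t s n @ (rev (alt s t n) @ alt s t n) @ []) (alt t s n @ [] @ [])"
    using pe_app[OF revpos[OF sp]] .
  ultimately show ?thesis by (auto intro: pres_eqv.trans pres_eqv.sym)
qed

lemma Ad_braid:
  assumes s: "s \<in> S" and t: "t \<in> S" and n: "m s t = enat n"
  shows "pres_eqv (adjoint_rels S m) (alt (cox_gen S m t) (cox_gen S m s) n) (alt (cox_gen S m s) (cox_gen S m t) n)"
proof (cases n)
  case 0 then show ?thesis by (simp add: pres_eqv.refl)
next
  case (Suc k)
  define p where "p = alt s t k"
  define c where "c = (if even k then s else t)"
  have cS: "c \<in> S" using s t by (simp add: c_def)
  have sp: "set p \<subseteq> S \<times> {True}" using alt_set[of s t k] s t by (auto simp: p_def)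
  have e1: "alt t s n = [(t,True)] @ p" by (simp add: Suc p_def)
  have e2: "alt s t n = p @ [(c,True)]" by (simp add: Suc p_def c_def alt_snoc del: alt.simps)
  have w: "pres_eqv (coxeter_rels S m) ([(t,True)] @ p) (p @ [(c,True)])"
    using W_braid[OF s t n] e1 e2 by simp
  have "pres_eqv (coxeter_rels S m) (rev p @ [(t,True)] @ p) (rev p @ p @ [(c,True)])"
    using pe_app[OF w, of "rev p" "[]"] by simp
  moreover have "pres_eqv (coxeter_rels S m) ((rev p @ p) @ [(c,True)]) ([] @ [(c,True)])"
    using pe_app2[OF revpos[OF sp] pres_eqv.refl] .
  ultimately have "pres_eqv (coxeter_rels S m) (rev p @ [(t,True)] @ p) [(c,True)]"
    by (auto intro: pres_eqv.trans)
  then have cc: "pclass (coxeter_rels S m) (rev p @ [(t,True)] @ p) = cox_gen S m c"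
    by (simp add: pclass_eq cox_gen_def)
  have "pres_eqv (adjoint_rels S m) (inv_word (phi S m p) @ [(cox_gen S m t, True)] @ phi S m p)
     [(cox_gen S m c, True)]"
    using conj[OF sp, of "[(t,True)]"] gen_Q[OF t] cc by (simp add: cox_gen_def)
  then have "pres_eqv (adjoint_rels S m) (phi S m p @ (inv_word (phi S m p) @ [(cox_gen S m t, True)] @ phi S m p) @ [])
     (phi S m p @ [(cox_gen S m c, True)] @ [])"
    by (rule pe_app)
  then have "pres_eqv (adjoint_rels S m) ([(cox_gen S m t, True)] @ phi S m p) (phi S m p @ [(cox_gen S m c, True)])"
    using pe_cancel_left[of "adjoint_rels S m" "phi S m p" "[(cox_gen S m t, True)] @ phi S m p"]
    by (auto intro: pres_eqv.trans pres_eqv.sym)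
  moreover have "phi S m (alt t s n) = [(cox_gen S m t, True)] @ phi S m p" by (simp add: e1 phi_append phi_def)
  moreover have "phi S m (alt s t n) = phi S m p @ [(cox_gen S m c, True)]" by (simp add: e2 phi_append phi_def)
  ultimately show ?thesis by (simp add: phi_alt)
qed

lemma compat: "pres_eqv (artin_rels S m) u v \<Longrightarrow> pres_eqv (adjoint_rels S m) (phi S m u) (phi S m v)"
proof (induction rule: pres_eqv.induct)
  case (refl w) then show ?case by (rule pres_eqv.refl)
next
  case (sym u v) then show ?case by (blast intro: pres_eqv.sym)
next
  case (trans u v w) then show ?case by (metis pres_eqv.trans)
next
  case (cancel u x b v)
  show ?case using pres_eqv.cancel[of "adjoint_rels S m" "phi S m u" "cox_gen S m x" b "phi S m v"]
    by (simp add: phi_append phi_def)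
next
  case (relator r u v)
  obtain s t n where s: "s \<in> S" and t: "t \<in> S" and n: "m s t = enat n"
    and r: "r = alt s t n @ inv_word (alt t s n)"
    using relator unfolding artin_rels_def by blast
  have "pres_eqv (adjoint_rels S m) (phi S m r) []"
  proof -
    have "pres_eqv (adjoint_rels S m) (alt (cox_gen S m s) (cox_gen S m t) n @ inv_word (alt (cox_gen S m t) (cox_gen S m s) n))
      (alt (cox_gen S m t) (cox_gen S m s) n @ inv_word (alt (cox_gen S m t) (cox_gen S m s) n))"
      by (intro pe_app2 pres_eqv.refl pres_eqv.sym[OF Ad_braid[OF s t n]])
    also have "pres_eqv (adjoint_rels S m) \<dots> []" by (rule pe_inv)
    finally show ?thesis by (simp add: r phi_append phi_inv phi_alt)
  qed
  then have "pres_eqv (adjoint_rels S m) (phi S m u @ phi S m r @ phi S m v) (phi S m u @ [] @ phi S m v)"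
    by (rule pe_app)
  then show ?case by (simp add: phi_append)
qed

end

context
  fixes S :: "'s set" and m :: "'s \<Rightarrow> 's \<Rightarrow> enat"
  assumes cm: "coxeter_matrix S m"
begin

lemma gen_surj:
  assumes x: "x \<in> coxeter_quandle S m"
  shows "\<exists>u. fst ` set u \<subseteq> S \<and> pres_eqv (adjoint_rels S m) (phi S m u) [(x,True)]"
proof -
  obtain w s where s: "s \<in> S" and w: "fst ` set w \<subseteq> S"
    and xe: "x = pclass (coxeter_rels S m) (inv_word w @ [(s, True)] @ w)"
    using x unfolding coxeter_quandle_def by blast
  define p where "p = map (\<lambda>(x,b). (x,True)) w"
  have sp: "set p \<subseteq> S \<times> {True}" using w by (auto simp: p_def)
  have iw: "fst ` set (inv_word w) \<subseteq> S" using w by (auto simp: inv_word_def)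
  have mi: "map (\<lambda>(x,b). (x,True)) (inv_word w) = rev p"
    by (simp add: p_def inv_word_def rev_map case_prod_unfold)
  have "pres_eqv (coxeter_rels S m) (inv_word w @ [(s, True)] @ w) (rev p @ [(s, True)] @ p)"
    using pos_eqv[OF cm iw] pos_eqv[OF cm w] mi
    by (intro pe_app2 pres_eqv.refl) (auto simp: p_def)
  then have xe2: "x = pclass (coxeter_rels S m) (rev p @ [(s, True)] @ p)"
    using xe pclass_eq by metis
  have "pres_eqv (adjoint_rels S m) (inv_word (phi S m p) @ [(pclass (coxeter_rels S m) [(s,True)], True)] @ phi S m p)
     [(x, True)]"
    using conj[OF cm sp, of "[(s,True)]"] gen_Q[OF cm s] xe2 by (simp add: cox_gen_def)
  moreover have "phi S m (inv_word p @ [(s,True)] @ p) =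
      inv_word (phi S m p) @ [(pclass (coxeter_rels S m) [(s,True)], True)] @ phi S m p"
    by (simp add: phi_append phi_inv) (simp add: phi_def cox_gen_def)
  moreover have "fst ` set (inv_word p @ [(s,True)] @ p) \<subseteq> S" using sp s
    by (auto simp: inv_word_def)
  ultimately show ?thesis by metis
qed

lemma surj_words:
  "fst ` set v \<subseteq> coxeter_quandle S m \<Longrightarrow>
   \<exists>u. fst ` set u \<subseteq> S \<and> pres_eqv (adjoint_rels S m) (phi S m u) v"
proof (induction v)
  case Nil then show ?case by (intro exI[of _ "[]"]) (simp add: phi_def pres_eqv.refl)
next
  case (Cons l v)
  obtain x b where l: "l = (x,b)" by force
  have x: "x \<in> coxeter_quandle S m" using Cons.prems l by auto
  obtain u where u: "fst ` set u \<subseteq> S" "pres_eqv (adjoint_rels S m) (phi S m u) v"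
    using Cons by auto
  obtain ux where ux: "fst ` set ux \<subseteq> S" "pres_eqv (adjoint_rels S m) (phi S m ux) [(x,True)]"
    using gen_surj[OF x] by blast
  show ?case
  proof (cases b)
    case True
    have "pres_eqv (adjoint_rels S m) (phi S m (ux @ u)) ([(x,True)] @ v)"
      unfolding phi_append using ux u by (intro pe_app2)
    then show ?thesis using ux u True l by (intro exI[of _ "ux @ u"]) auto
  next
    case False
    have "pres_eqv (adjoint_rels S m) ([(x,False)] @ (phi S m ux @ inv_word (phi S m ux)))
       ([(x,False)] @ [])" using pe_app2[OF pres_eqv.refl pe_inv] .
    then have "pres_eqv (adjoint_rels S m) ([(x,False)] @ phi S m ux @ inv_word (phi S m ux)) [(x,False)]"
      by simp
    moreover have "pres_eqv (adjoint_rels S m) ([(x,False)] @ phi S m ux @ inv_word (phi S m ux))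
        ([(x,False)] @ [(x,True)] @ inv_word (phi S m ux))"
      using ux by (intro pe_app2 pres_eqv.refl)
    moreover have "pres_eqv (adjoint_rels S m) ([] @ [(x,False),(x,\<not>False)] @ inv_word (phi S m ux))
        ([] @ inv_word (phi S m ux))" by (rule pres_eqv.cancel)
    ultimately have "pres_eqv (adjoint_rels S m) (inv_word (phi S m ux)) [(x,False)]"
      by simp (meson pres_eqv.sym pres_eqv.trans)
    then have "pres_eqv (adjoint_rels S m) (phi S m (inv_word ux @ u)) ([(x,False)] @ v)"
      unfolding phi_append phi_inv using u by (intro pe_app2)
    moreover have "fst ` set (inv_word ux @ u) \<subseteq> S" using ux u by (auto simp: inv_word_def)
    ultimately show ?thesis using False l by (intro exI[of _ "inv_word ux @ u"]) auto
  qed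
qed

end

theorem proposition3p3:
  fixes S :: "'s set" and m :: "'s \<Rightarrow> 's \<Rightarrow> enat"
  assumes "coxeter_matrix S m"
  shows "\<exists>\<psi>. \<psi> \<in> hom (artin_group S m) (adjoint_group S m) \<and>
    (\<forall>s\<in>S. \<psi> (pclass (artin_rels S m) [(s, True)]) =
             pclass (adjoint_rels S m) [(cox_gen S m s, True)]) \<and>
    \<psi> ` carrier (artin_group S m) = carrier (adjoint_group S m)"
proof -
  define \<psi> where "\<psi> A = {v. \<exists>a\<in>A. pres_eqv (adjoint_rels S m) (phi S m a) v}" for A
  have psi: "\<psi> (pclass (artin_rels S m) a) = pclass (adjoint_rels S m) (phi S m a)" for a
    unfolding \<psi>_def pclass_def
    by (auto intro: pres_eqv.refl pres_eqv.trans compat[OF assms])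
  have phiQ: "fst ` set w \<subseteq> S \<Longrightarrow> fst ` set (phi S m w) \<subseteq> coxeter_quandle S m" for w
    using gen_Q[OF assms] by (auto simp: phi_def)
  have ca: "carrier (artin_group S m) = pclass (artin_rels S m) ` {w. fst ` set w \<subseteq> S}"
    by (simp add: artin_group_def presented_group_def)
  have cd: "carrier (adjoint_group S m) = pclass (adjoint_rels S m) ` {w. fst ` set w \<subseteq> coxeter_quandle S m}"
    by (simp add: adjoint_group_def presented_group_def)
  have maps: "\<psi> ` carrier (artin_group S m) \<subseteq> carrier (adjoint_group S m)"
    unfolding ca cd using phiQ psi by auto
  have "\<psi> \<in> hom (artin_group S m) (adjoint_group S m)"
  proof (rule homI)
    fix x assume "x \<in> carrier (artin_group S m)"
    then show "\<psi> x \<in> carrier (adjoint_group S m)" using maps by blast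
  next
    fix x y assume "x \<in> carrier (artin_group S m)" "y \<in> carrier (artin_group S m)"
    then obtain a b where "x = pclass (artin_rels S m) a" "y = pclass (artin_rels S m) b"
      unfolding ca by blast
    then show "\<psi> (x \<otimes>\<^bsub>artin_group S m\<^esub> y) = \<psi> x \<otimes>\<^bsub>adjoint_group S m\<^esub> \<psi> y"
      unfolding artin_group_def adjoint_group_def
      by (simp add: mult_pclass psi phi_append)
  qed
  moreover have "\<forall>s\<in>S. \<psi> (pclass (artin_rels S m) [(s, True)]) =
             pclass (adjoint_rels S m) [(cox_gen S m s, True)]"
    by (simp add: psi phi_def)
  moreover have "carrier (adjoint_group S m) \<subseteq> \<psi> ` carrier (artin_group S m)"
  proof
    fix X assume "X \<in> carrier (adjoint_group S m)"
    then obtain v where v: "fst ` set v \<subseteq> coxeter_quandle S m" "X = pclass (adjoint_rels S m) v"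
      unfolding cd by blast
    obtain u where u: "fst ` set u \<subseteq> S" "pres_eqv (adjoint_rels S m) (phi S m u) v"
      using surj_words[OF assms v(1)] by blast
    have "X = \<psi> (pclass (artin_rels S m) u)" using u v psi pclass_eq by metis
    then show "X \<in> \<psi> ` carrier (artin_group S m)" unfolding ca using u by blast
  qed
  ultimately show ?thesis using maps by blast
qed

end
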